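(* Consider the single-target search setting described in the context, with planning horizon $T\geq 1$, discount factor $\lambda\in[0,1]$, and probability of detection $P_d\in(0,1]$, under the ideal measurement set assumptions (i) $\Sigma=0$ (target-generated measurements are error-free) and (ii) $\lambda_{FA}=0$ (no false alarms). Then the suboptimal (open-loop) control approach and the optimal (Bellman-type, closed-loop) control approach generate identical first actions, i.e. $\hat{a}^\star_1=a^\star_1$, where $$a^\star_1=\operatorname{argmin}_{a_1}\Big[\min_{a_{2:T}}\ \mathbb{E}_{z_{1:T}}\Big[\sum_{t=1}^T\lambda^{t-1}r_t(z_{1:t},a_{1:t})\Big]\Big]$$ and $$\hat{a}^\star_1=\operatorname{argmin}_{a_1}\mathbb{E}_{z_1}\Big[r_1(z_1,a_1)+\lambda\min_{a_2}\mathbb{E}_{z_2\mid z_1}\Big[r_2(z_{1:2},a_{1:2})+\lambda\min_{a_3}\mathbb{E}_{z_3\mid z_{1:2}}\Big[r_3(z_{1:3},a_{1:3})+\cdots+\lambda\min_{a_T}\mathbb{E}_{z_T\mid z_{1:T-1}}\big[r_T(z_{1:T},a_{1:T})\big]\Big]\Big]\Big],$$ this holding irrespective of the length $T$ of the planning horizon. (In the optimal approach, each inner minimisation over $a_t$ is performed separately for each realisation of the earlier measurements $z_{1:t-1}$, whereas in the suboptimal approach $a_{2:T}$ are chosen jointly, independently of the measurements.)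
   Context: Target model: there is either zero or one stationary target. The hypotheses are $x_0$ ("no target present") and $x_1,\dots,x_n\in\mathbb{R}^2$ ("a target exists at $x_i$"), with prior probabilities $p(x_0)=1-r$ and $p(x_i)=r\,w_i$ for $i\ge 1$, where $r\in[0,1]$ is the probability of existence and $w_i\ge 0$, $\sum_{i=1}^n w_i=1$. Actions $a$ belong to a finite set $\mathbb{A}$; each action $a$ determines a sensor field of view $\mathrm{FOV}(a)\subseteq\mathbb{R}^2$ (possibly empty, e.g. "do not observe"). At each time $t=1,\dots,T$ an action $a_t$ is taken and a (finite set-valued) measurement $z_t$ is received; conditional on the hypothesis, measurements at different times are independent. General measurement model: if the hypothesis is $x_i$ with $i>0$ and $x_i\in\mathrm{FOV}(a_t)$, the target is detected with probability $P_d$, producing a measurement distributed as $\mathcal{N}(x_i,\Sigma)$; otherwise no target-generated measurement occurs; in addition a Poisson number (mean $\lambda_{FA}$ times the area of the FOV) of false alarms uniformly distributed in the FOV is generated. Under the ideal assumptions $\Sigma=0$, $\lambda_{FA}=0$ this means: $z_t=\{x_i\}$ with probability $P_d$ and $z_t=\emptyset$ with probability $1-P_d$ if $i>0$ and $x_i\in\mathrm{FOV}(a_t)$, and $z_t=\emptyset$ otherwise. Posterior hypothesis probabilities are $p(x_i\mid z_{1:t},a_{1:t})\propto p(x_i)\prod_{j=1}^t p(z_j\mid x_i,a_j)$ for $i=0,\dots,n$, and posterior location weights given existence are $w^i_{1:t}\propto p(x_i)\prod_{j=1}^t p(z_j\mid x_i,a_j)$ for $i\ge1$, normalised so $\sum_{i\ge1}w^i_{1:t}=1$.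 GOSPA cost (parameters $p=2$, $\alpha=2$, cut-off $c>0$) between at-most-one-element sets: $d(\emptyset,\emptyset)^2=0$; $d(\{x\},\emptyset)^2=d(\emptyset,\{y\})^2=c^2/2$; $d(\{x\},\{y\})^2=\min(\|x-y\|^2,c^2)$. The per-step cost is $r_t(z_{1:t},a_{1:t})=\mathrm{MMS\text{-}GOSPA}(z_{1:t},a_{1:t})=\min_{\hat X\in\{\emptyset,\{\hat X_e\}\}}\sum_{i=0}^n d(X_i,\hat X)^2\,p(x_i\mid z_{1:t},a_{1:t})$, where $X_0=\emptyset$, $X_i=\{x_i\}$ for $i\ge1$, and $\hat X_e=\sum_{i=1}^n w^i_{1:t}x_i$ is the posterior mean location. Expectations $\mathbb{E}_{z_{1:T}}$ are with respect to the joint (prior-predictive) distribution of measurements given the actions, and $\mathbb{E}_{z_t\mid z_{1:t-1}}$ with respect to the predictive distribution of $z_t$ given the earlier measurements and actions. Ties in the argmin are broken by the same rule in both approaches. *)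

theory Defs
  imports "HOL-Analysis.Analysis"
begin

type_synonym pt = "real ^ 2"
type_synonym meas = "pt set"

text \<open>Model parameters: number n of location hypotheses, locations x_1..x_n,
  probability of existence r, location weights w_i, detection probability P_d,
  field of view of each action, GOSPA cut-off c.\<close>
record 'a search_model =
  nH  :: nat
  loc :: "nat \<Rightarrow> pt"
  pex :: real
  wt  :: "nat \<Rightarrow> real"
  pd  :: real
  fov :: "'a \<Rightarrow> pt set"
  cut :: real

text \<open>Squared GOSPA distance (p = 2, alpha = 2) between sets with at most one element.\<close>
definition gospa2 :: "real \<Rightarrow> pt set \<Rightarrow> pt set \<Rightarrow> real" where
  "gospa2 c X Y =
     (if X = {} \<and> Y = {} then 0
      else if X = {} \<or> Y = {} then c^2 / 2
      else min ((dist (the_elem X) (the_elem Y))^2) (c^2))"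

definition hyp_set :: "'a search_model \<Rightarrow> nat \<Rightarrow> pt set" where
  "hyp_set M i = (if i = 0 then {} else {loc M i})"

definition prior :: "'a search_model \<Rightarrow> nat \<Rightarrow> real" where
  "prior M i = (if i = 0 then 1 - pex M else pex M * wt M i)"

text \<open>Measurement likelihood p(z | x_i, a) under the ideal assumptions
  (Sigma = 0: error-free detections; lambda_FA = 0: no false alarms).\<close>
definition lik :: "'a search_model \<Rightarrow> nat \<Rightarrow> 'a \<Rightarrow> meas \<Rightarrow> real" where
  "lik M i a z =
     (if 0 < i \<and> loc M i \<in> fov M a
      then (if z = {loc M i} then pd M else if z = {} then 1 - pd M else 0)
      else (if z = {} then 1 else 0))"

text \<open>Unnormalised posterior p(x_i) prod_j p(z_j | x_i, a_j); zs = z_{1:t}, as = a_{1:t}.\<close>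
definition jw :: "'a search_model \<Rightarrow> nat \<Rightarrow> meas list \<Rightarrow> 'a list \<Rightarrow> real" where
  "jw M i zs as = prior M i * (\<Prod>j<length zs. lik M i (as ! j) (zs ! j))"

definition joint :: "'a search_model \<Rightarrow> meas list \<Rightarrow> 'a list \<Rightarrow> real" where
  "joint M zs as = (\<Sum>i\<le>nH M. jw M i zs as)"

definition post :: "'a search_model \<Rightarrow> nat \<Rightarrow> meas list \<Rightarrow> 'a list \<Rightarrow> real" where
  "post M i zs as = jw M i zs as / joint M zs as"

definition locw :: "'a search_model \<Rightarrow> nat \<Rightarrow> meas list \<Rightarrow> 'a list \<Rightarrow> real" where
  "locw M i zs as = jw M i zs as / (\<Sum>k\<in>{1..nH M}. jw M k zs as)"

definition post_mean :: "'a search_model \<Rightarrow> meas list \<Rightarrow> 'a list \<Rightarrow> pt" where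
  "post_mean M zs as = (\<Sum>i\<in>{1..nH M}. locw M i zs as *\<^sub>R loc M i)"

definition mms_gospa :: "'a search_model \<Rightarrow> meas list \<Rightarrow> 'a list \<Rightarrow> real" where
  "mms_gospa M zs as =
     min (\<Sum>i\<le>nH M. gospa2 (cut M) (hyp_set M i) {} * post M i zs as)
         (\<Sum>i\<le>nH M. gospa2 (cut M) (hyp_set M i) {post_mean M zs as} * post M i zs as)"

text \<open>Finite support of the measurement distribution under the ideal assumptions.\<close>
definition meas_support :: "'a search_model \<Rightarrow> meas set" where
  "meas_support M = insert {} ((\<lambda>i. {loc M i}) ` {1..nH M})"

definition pred :: "'a search_model \<Rightarrow> meas list \<Rightarrow> 'a list \<Rightarrow> meas \<Rightarrow> 'a \<Rightarrow> real" where
  "pred M zs as z a = joint M (zs @ [z]) (as @ [a]) / joint M zs as"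

definition ol_cost :: "'a search_model \<Rightarrow> real \<Rightarrow> nat \<Rightarrow> 'a list \<Rightarrow> real" where
  "ol_cost M lam T as =
     (\<Sum>zs\<in>{zs. length zs = T \<and> set zs \<subseteq> meas_support M}.
        joint M zs as * (\<Sum>t\<in>{1..T}. lam ^ (t - 1) * mms_gospa M (take t zs) (take t as)))"

definition ol_obj :: "'a search_model \<Rightarrow> real \<Rightarrow> nat \<Rightarrow> 'a set \<Rightarrow> 'a \<Rightarrow> real" where
  "ol_obj M lam T A a1 =
     Min ((\<lambda>rest. ol_cost M lam T (a1 # rest)) ` {rest. length rest = T - 1 \<and> set rest \<subseteq> A})"

text \<open>Closed-loop (optimal, Bellman-type) approach: cl_Q M lam A m zs as a is
  E_{z | zs}[ r(zs@[z], as@[a]) + lam * min_{a'} (...) ] with m further decision stages.\<close>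
primrec cl_Q :: "'a search_model \<Rightarrow> real \<Rightarrow> 'a set \<Rightarrow> nat \<Rightarrow> meas list \<Rightarrow> 'a list \<Rightarrow> 'a \<Rightarrow> real" where
  "cl_Q M lam A 0 zs as a =
     (\<Sum>z\<in>meas_support M. pred M zs as z a * mms_gospa M (zs @ [z]) (as @ [a]))"
| "cl_Q M lam A (Suc m) zs as a =
     (\<Sum>z\<in>meas_support M. pred M zs as z a *
        (mms_gospa M (zs @ [z]) (as @ [a])
         + lam * Min ((cl_Q M lam A m (zs @ [z]) (as @ [a])) ` A)))"

definition cl_obj :: "'a search_model \<Rightarrow> real \<Rightarrow> nat \<Rightarrow> 'a set \<Rightarrow> 'a \<Rightarrow> real" where
  "cl_obj M lam T A a1 = cl_Q M lam A (T - 1) [] [] a1"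

text \<open>Argmin over the finite action set; a tie-breaking rule tb picks one element.\<close>
definition argmin_set :: "'a set \<Rightarrow> ('a \<Rightarrow> real) \<Rightarrow> 'a set" where
  "argmin_set A f = {a \<in> A. \<forall>b\<in>A. f a \<le> f b}"

end

theory Submission
  imports Defs
begin

definition LL :: "'b set \<Rightarrow> nat \<Rightarrow> 'b list set" where
  "LL S n = {w. length w = n \<and> set w \<subseteq> S}"

lemma LL_finite: "finite S \<Longrightarrow> finite (LL S n)"
  unfolding LL_def using finite_lists_length_eq[of S n] by (simp add: conj_commute)

lemma LL_ne: "S \<noteq> {} \<Longrightarrow> LL S n \<noteq> {}"
  unfolding LL_def by (auto intro!: exI[of _ "replicate n (SOME x. x \<in> S)"] some_in_eq[THEN iffD2])

lemma LL_0: "LL S 0 = {[]}" unfolding LL_def by auto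

lemma LL_Suc: "LL S (Suc n) = (\<lambda>(z,w). z#w) ` (S \<times> LL S n)"
  unfolding LL_def by (auto simp: length_Suc_conv)

lemma sum_LL_Suc:
  assumes "finite S"
  shows "(\<Sum>w\<in>LL S (Suc n). f w) = (\<Sum>z\<in>S. \<Sum>w\<in>LL S n. f (z#w))"
proof -
  have "inj_on (\<lambda>(z,w). z#w) (S \<times> LL S n)" by (auto simp: inj_on_def)
  then have "(\<Sum>w\<in>LL S (Suc n). f w) = (\<Sum>p\<in>S \<times> LL S n. f (fst p # snd p))"
    unfolding LL_Suc by (subst sum.reindex) (auto simp: case_prod_beta)
  also have "\<dots> = (\<Sum>z\<in>S. \<Sum>w\<in>LL S n. f (z#w))"
    by (simp add: sum.cartesian_product split_def)
  finally show ?thesis .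
qed

lemma Min_Min_LL:
  fixes F :: "'b list \<Rightarrow> real"
  assumes "finite A" "A \<noteq> {}"
  shows "Min ((\<lambda>a. Min ((\<lambda>r. F (a#r)) ` LL A m)) ` A) = Min (F ` LL A (Suc m))"
proof (rule order.antisym)
  have fin: "finite (LL A m)" "LL A m \<noteq> {}" using assms LL_finite LL_ne by blast+
  have fin2: "finite (LL A (Suc m))" "LL A (Suc m) \<noteq> {}" using assms LL_finite LL_ne by blast+
  show "Min ((\<lambda>a. Min ((\<lambda>r. F (a#r)) ` LL A m)) ` A) \<le> Min (F ` LL A (Suc m))"
  proof (subst Min_ge_iff)
    show "\<forall>y\<in>F ` LL A (Suc m). Min ((\<lambda>a. Min ((\<lambda>r. F (a#r)) ` LL A m)) ` A) \<le> y"
    proof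
      fix y assume "y \<in> F ` LL A (Suc m)"
      then obtain a r where ar: "a \<in> A" "r \<in> LL A m" "y = F (a#r)" unfolding LL_Suc by auto
      have "Min ((\<lambda>a. Min ((\<lambda>r. F (a#r)) ` LL A m)) ` A) \<le> Min ((\<lambda>r. F (a#r)) ` LL A m)"
        using assms ar by (intro Min_le) auto
      also have "\<dots> \<le> F (a#r)" using fin ar by (intro Min_le) auto
      finally show "Min ((\<lambda>a. Min ((\<lambda>r. F (a#r)) ` LL A m)) ` A) \<le> y" using ar by simp
    qed
  qed (use fin2 in auto)
  show "Min (F ` LL A (Suc m)) \<le> Min ((\<lambda>a. Min ((\<lambda>r. F (a#r)) ` LL A m)) ` A)"
    using assms fin fin2
    by (auto simp: Min_ge_iff LL_Suc intro!: Min_le)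
qed


lemma sum_t1: "(\<Sum>t\<in>{1..Suc n}. g t) = g 1 + (\<Sum>t\<in>{1..n}. g (Suc t))"
proof -
  have "sum g {1..Suc n} = g 1 + sum g {Suc 1..Suc n}" by (rule sum.atLeast_Suc_atMost) simp
  also have "sum g {Suc 1..Suc n} = (\<Sum>t\<in>{1..n}. g (Suc t))" by (rule sum.shift_bounds_cl_Suc_ivl)
  finally show ?thesis .
qed

definition OL :: "'a search_model \<Rightarrow> real \<Rightarrow> meas list \<Rightarrow> 'a list \<Rightarrow> 'a list \<Rightarrow> real" where
  "OL M lam zs as bs = (\<Sum>w\<in>LL (meas_support M) (length bs). joint M (zs@w) (as@bs) *
     (\<Sum>t\<in>{1..length bs}. lam^(t-1) * mms_gospa M (zs @ take t w) (as @ take t bs)))"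

context
  fixes M :: "'a search_model"
  assumes pd0: "0 \<le> pd M" and pd1: "pd M \<le> 1" and pex0: "0 \<le> pex M" and pex1: "pex M \<le> 1"
    and wt0: "\<forall>i\<in>{1..nH M}. 0 \<le> wt M i"
begin

lemma lik_nonneg: "0 \<le> lik M i a z"
  using pd0 pd1 unfolding lik_def by auto

lemma prior_nonneg: "i \<le> nH M \<Longrightarrow> 0 \<le> prior M i"
  using pex0 pex1 wt0 unfolding prior_def by auto

lemma jw_nonneg: "i \<le> nH M \<Longrightarrow> 0 \<le> jw M i zs as"
  unfolding jw_def using prior_nonneg lik_nonneg by (intro mult_nonneg_nonneg prod_nonneg) auto

lemma joint_nonneg: "0 \<le> joint M zs as"
  unfolding joint_def using jw_nonneg by (intro sum_nonneg) auto

lemma jw_snoc: "length as = length zs \<Longrightarrow> jw M i (zs@[z]) (as@[a]) = jw M i zs as * lik M i a z"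
proof -
  assume l: "length as = length zs"
  have "(\<Prod>j<length (zs@[z]). lik M i ((as@[a]) ! j) ((zs@[z]) ! j))
     = (\<Prod>j<length zs. lik M i ((as@[a]) ! j) ((zs@[z]) ! j)) * lik M i a z"
    using l by (simp add: prod.lessThan_Suc nth_append)
  also have "(\<Prod>j<length zs. lik M i ((as@[a]) ! j) ((zs@[z]) ! j)) = (\<Prod>j<length zs. lik M i (as ! j) (zs ! j))"
    using l by (intro prod.cong refl) (simp add: nth_append)
  finally show ?thesis unfolding jw_def by (simp add: mult.assoc)
qed

lemma lik_sum: "i \<le> nH M \<Longrightarrow> (\<Sum>z\<in>meas_support M. lik M i a z) = 1"
proof -
  assume i: "i \<le> nH M"
  have fin: "finite (meas_support M)" unfolding meas_support_def by simp
  show ?thesis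
  proof (cases "0 < i \<and> loc M i \<in> fov M a")
    case True
    have sub: "{{}, {loc M i}} \<subseteq> meas_support M" using True i unfolding meas_support_def by auto
    have "(\<Sum>z\<in>meas_support M. lik M i a z) = (\<Sum>z\<in>{{}, {loc M i}}. lik M i a z)"
      by (rule sum.mono_neutral_right[OF fin sub]) (auto simp: lik_def)
    also have "\<dots> = 1" using True by (simp add: lik_def)
    finally show ?thesis .
  next
    case False
    have sub: "{{}} \<subseteq> meas_support M" unfolding meas_support_def by auto
    have "(\<Sum>z\<in>meas_support M. lik M i a z) = (\<Sum>z\<in>{{}}. lik M i a z)"
      by (rule sum.mono_neutral_right[OF fin sub]) (use False in \<open>auto simp: lik_def\<close>)
    also have "\<dots> = 1" using False by (auto simp: lik_def)
    finally show ?thesis .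
  qed
qed

lemma fin_S: "finite (meas_support M)" unfolding meas_support_def by simp

lemma jw_marg: "length as = length zs \<Longrightarrow> length bs = n \<Longrightarrow> i \<le> nH M \<Longrightarrow>
   (\<Sum>w\<in>LL (meas_support M) n. jw M i (zs@w) (as@bs)) = jw M i zs as"
proof (induction n arbitrary: zs as bs)
  case 0
  then show ?case by (simp add: LL_0)
next
  case (Suc n)
  then obtain b bs' where bs: "bs = b # bs'" "length bs' = n" by (cases bs) auto
  have "(\<Sum>w\<in>LL (meas_support M) (Suc n). jw M i (zs@w) (as@bs))
     = (\<Sum>z\<in>meas_support M. \<Sum>w\<in>LL (meas_support M) n. jw M i ((zs@[z])@w) ((as@[b])@bs'))"
    by (simp add: sum_LL_Suc[OF fin_S] bs)
  also have "\<dots> = (\<Sum>z\<in>meas_support M. jw M i (zs@[z]) (as@[b]))"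
    using Suc by (intro sum.cong refl Suc.IH) (auto simp: bs)
  also have "\<dots> = (\<Sum>z\<in>meas_support M. jw M i zs as * lik M i b z)"
    using Suc.prems by (simp add: jw_snoc)
  also have "\<dots> = jw M i zs as" using lik_sum[OF Suc.prems(3)] by (simp add: sum_distrib_left[symmetric])
  finally show ?case .
qed

lemma joint_marg: "length as = length zs \<Longrightarrow> length bs = n \<Longrightarrow>
   (\<Sum>w\<in>LL (meas_support M) n. joint M (zs@w) (as@bs)) = joint M zs as"
  unfolding joint_def by (subst sum.swap) (simp add: jw_marg)

lemma joint_pred: "length as = length zs \<Longrightarrow>
   joint M zs as * pred M zs as z a = joint M (zs@[z]) (as@[a])"
proof -
  assume l: "length as = length zs"
  show ?thesis
  proof (cases "joint M zs as = 0")
    case True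
    then have "\<forall>i\<in>{..nH M}. jw M i zs as = 0" unfolding joint_def
      using sum_nonneg_eq_0_iff[of "{..nH M}" "\<lambda>i. jw M i zs as"] jw_nonneg by auto
    then have "joint M (zs@[z]) (as@[a]) = 0" unfolding joint_def using l by (simp add: jw_snoc)
    then show ?thesis using True by simp
  next
    case False
    then show ?thesis unfolding pred_def by simp
  qed
qed

lemma mms_zero:
  assumes j: "j < length zs" and X: "zs ! j \<noteq> {}"
  shows "mms_gospa M zs as = 0"
proof -
  have key: "0 < i \<and> zs ! j = {loc M i}" if "jw M i zs as \<noteq> 0" for i
  proof -
    have "(\<Prod>j<length zs. lik M i (as ! j) (zs ! j)) \<noteq> 0" using that unfolding jw_def by auto
    then have "lik M i (as ! j) (zs ! j) \<noteq> 0" using j by (auto simp: prod_zero_iff)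
    then show ?thesis using X unfolding lik_def by (auto split: if_splits)
  qed
  have post0: "0 \<le> post M i zs as" if "i \<le> nH M" for i
    unfolding post_def using jw_nonneg[OF that] joint_nonneg by simp
  have S1: "(\<Sum>i\<le>nH M. gospa2 (cut M) (hyp_set M i) {post_mean M zs as} * post M i zs as) = 0"
  proof (rule sum.neutral, rule ballI)
    fix i assume i: "i \<in> {..nH M}"
    show "gospa2 (cut M) (hyp_set M i) {post_mean M zs as} * post M i zs as = 0"
    proof (cases "jw M i zs as = 0")
      case True then show ?thesis by (simp add: post_def)
    next
      case False
      with key have k: "0 < i" "zs ! j = {loc M i}" by auto
      have iin: "i \<in> {1..nH M}" using i k by auto
      have pos: "0 < (\<Sum>k\<in>{1..nH M}. jw M k zs as)"
      proof -
        have "jw M i zs as \<le> (\<Sum>k\<in>{1..nH M}. jw M k zs as)"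
          using iin jw_nonneg by (intro member_le_sum) auto
        moreover have "0 \<le> jw M i zs as" using i by (intro jw_nonneg) auto
        ultimately have "jw M i zs as \<le> (\<Sum>k\<in>{1..nH M}. jw M k zs as) \<and> 0 < jw M i zs as"
          using False by auto
        then show ?thesis by linarith
      qed
      have "post_mean M zs as = (\<Sum>k\<in>{1..nH M}. locw M k zs as *\<^sub>R loc M i)"
        unfolding post_mean_def
      proof (rule sum.cong[OF refl])
        fix k assume "k \<in> {1..nH M}"
        show "locw M k zs as *\<^sub>R loc M k = locw M k zs as *\<^sub>R loc M i"
        proof (cases "jw M k zs as = 0")
          case True then show ?thesis by (simp add: locw_def)
        next
          case False then have "zs ! j = {loc M k}" using key by blast
          then show ?thesis using k by simp
        qed
      qed
      also have "\<dots> = (\<Sum>k\<in>{1..nH M}. locw M k zs as) *\<^sub>R loc M i"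
        by (simp add: scaleR_sum_left)
      also have "(\<Sum>k\<in>{1..nH M}. locw M k zs as) = 1"
        unfolding locw_def using pos by (simp add: sum_divide_distrib[symmetric])
      finally have pm: "post_mean M zs as = loc M i" by simp
      show ?thesis using k by (simp add: pm hyp_set_def gospa2_def)
    qed
  qed
  have S0: "0 \<le> (\<Sum>i\<le>nH M. gospa2 (cut M) (hyp_set M i) {} * post M i zs as)"
    using post0 by (intro sum_nonneg mult_nonneg_nonneg) (auto simp: gospa2_def)
  show ?thesis unfolding mms_gospa_def using S0 S1 by simp
qed

lemma OL_zero:
  assumes "x \<in> set zs" "x \<noteq> {}"
  shows "OL M lam zs as bs = 0"
proof -
  obtain j where j: "j < length zs" "zs ! j = x" using assms(1) by (auto simp: in_set_conv_nth)
  have "mms_gospa M (zs @ ys) bs' = 0" for ys bs'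
    using j assms(2) by (intro mms_zero[of j]) (auto simp: nth_append)
  then show ?thesis unfolding OL_def by simp
qed

lemma OL_decomp:
  assumes l: "length as = length zs"
  shows "OL M lam zs as (a#rest) =
    (\<Sum>z\<in>meas_support M. joint M (zs@[z]) (as@[a]) * mms_gospa M (zs@[z]) (as@[a]))
    + lam * (\<Sum>z\<in>meas_support M. OL M lam (zs@[z]) (as@[a]) rest)"
proof -
  define n where "n = length rest"
  define S where "S = meas_support M"
  define J where "J z w = joint M ((zs@[z])@w) ((as@[a])@rest)" for z w
  define I where "I z w = (\<Sum>t\<in>{1..n}. lam^(t-1) * mms_gospa M ((zs@[z]) @ take t w) ((as@[a]) @ take t rest))" for z w
  define m where "m z = mms_gospa M (zs@[z]) (as@[a])" for z
  have inner: "(\<Sum>t\<in>{1..Suc n}. lam^(t-1) * mms_gospa M (zs @ take t (z#w)) (as @ take t (a#rest)))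
      = m z + lam * I z w" for z w
  proof -
    have "(\<Sum>t\<in>{1..Suc n}. lam^(t-1) * mms_gospa M (zs @ take t (z#w)) (as @ take t (a#rest)))
       = lam^0 * mms_gospa M (zs @ [z]) (as @ [a]) + (\<Sum>t\<in>{1..n}. lam^t * mms_gospa M (zs @ z # take t w) (as @ a # take t rest))"
      by (subst sum_t1) simp
    also have "(\<Sum>t\<in>{1..n}. lam^t * mms_gospa M (zs @ z # take t w) (as @ a # take t rest))
       = lam * I z w" unfolding I_def sum_distrib_left
    proof (intro sum.cong refl)
      fix t assume "t \<in> {1..n}"
      then have "lam ^ t = lam * lam^(t-1)" by (cases t) auto
      then show "lam^t * mms_gospa M (zs @ z # take t w) (as @ a # take t rest)
        = lam * (lam^(t-1) * mms_gospa M ((zs@[z]) @ take t w) ((as@[a]) @ take t rest))" by simp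
    qed
    finally show ?thesis by (simp add: m_def)
  qed
  have "OL M lam zs as (a#rest) = (\<Sum>w\<in>LL S (Suc n). joint M (zs@w) (as@a#rest) *
      (\<Sum>t\<in>{1..Suc n}. lam^(t-1) * mms_gospa M (zs @ take t w) (as @ take t (a#rest))))"
    unfolding OL_def S_def n_def by simp
  also have "\<dots> = (\<Sum>z\<in>S. \<Sum>w\<in>LL S n. J z w * (m z + lam * I z w))"
    unfolding sum_LL_Suc[OF fin_S[folded S_def]] by (intro sum.cong refl, subst inner) (simp add: J_def)
  also have "\<dots> = (\<Sum>z\<in>S. (\<Sum>w\<in>LL S n. J z w) * m z) + lam * (\<Sum>z\<in>S. \<Sum>w\<in>LL S n. J z w * I z w)"
    by (simp add: distrib_left sum.distrib sum_distrib_left sum_distrib_right mult_ac)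
  also have "(\<Sum>z\<in>S. (\<Sum>w\<in>LL S n. J z w) * m z) = (\<Sum>z\<in>S. joint M (zs@[z]) (as@[a]) * m z)"
  proof (intro sum.cong refl)
    fix z
    have "(\<Sum>w\<in>LL S n. joint M ((zs@[z])@w) ((as@[a])@rest)) = joint M (zs@[z]) (as@[a])"
      unfolding S_def by (rule joint_marg) (use l in \<open>auto simp: n_def\<close>)
    then show "(\<Sum>w\<in>LL S n. J z w) * m z = joint M (zs@[z]) (as@[a]) * m z"
      unfolding J_def by simp
  qed
  also have "(\<Sum>z\<in>S. \<Sum>w\<in>LL S n. J z w * I z w) = (\<Sum>z\<in>S. OL M lam (zs@[z]) (as@[a]) rest)"
    unfolding J_def I_def OL_def S_def n_def by simp
  finally show ?thesis unfolding S_def m_def .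
qed

lemma main_ind:
  fixes A :: "'a set" and lam :: real and a :: 'a
  assumes A: "finite A" "A \<noteq> {}" and lam: "0 \<le> lam"
  shows "length as = length zs \<Longrightarrow>
    joint M zs as * cl_Q M lam A m zs as a = Min ((\<lambda>r. OL M lam zs as (a#r)) ` LL A m)"
proof (induction m arbitrary: zs as a)
  case 0
  have "joint M zs as * cl_Q M lam A 0 zs as a =
     (\<Sum>z\<in>meas_support M. joint M (zs@[z]) (as@[a]) * mms_gospa M (zs@[z]) (as@[a]))"
    using 0 by (simp add: sum_distrib_left mult.assoc[symmetric] joint_pred)
  also have "\<dots> = OL M lam zs as [a]"
    using OL_decomp[OF 0, where a=a and rest="[]"] by (simp add: OL_def LL_0)
  finally show ?case by (simp add: LL_0)
next
  case (Suc m)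
  define S where "S = meas_support M"
  define C where "C = (\<Sum>z\<in>S. joint M (zs@[z]) (as@[a]) * mms_gospa M (zs@[z]) (as@[a]))"
  define G where "G z = Min ((\<lambda>r. OL M lam (zs@[z]) (as@[a]) r) ` LL A (Suc m))" for z
  have finL: "finite (LL A (Suc m))" "LL A (Suc m) \<noteq> {}" using A LL_finite LL_ne by blast+
  have l1: "length (as@[a]) = length (zs@[z])" for z using Suc.prems by simp
  have step: "joint M (zs@[z]) (as@[a]) * Min ((cl_Q M lam A m (zs@[z]) (as@[a])) ` A) = G z" for z
  proof -
    have "joint M (zs@[z]) (as@[a]) * Min ((cl_Q M lam A m (zs@[z]) (as@[a])) ` A)
      = Min ((\<lambda>x. joint M (zs@[z]) (as@[a]) * x) ` (cl_Q M lam A m (zs@[z]) (as@[a])) ` A)"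
      using A joint_nonneg by (intro mono_Min_commute) (auto intro: monoI mult_left_mono)
    also have "\<dots> = Min ((\<lambda>a'. Min ((\<lambda>r. OL M lam (zs@[z]) (as@[a]) (a'#r)) ` LL A m)) ` A)"
      by (simp add: image_image Suc.IH[OF l1])
    also have "\<dots> = G z" unfolding G_def by (rule Min_Min_LL[OF A])
    finally show ?thesis .
  qed
  have Gz: "G z = 0" if "z \<noteq> {}" for z
  proof -
    have "(\<lambda>r. OL M lam (zs@[z]) (as@[a]) r) ` LL A (Suc m) = {0}"
      using finL that OL_zero[of z "zs@[z]"] by auto
    then show ?thesis unfolding G_def by simp
  qed
  have e: "{} \<in> S" unfolding S_def meas_support_def by simp
  have finS: "finite S" unfolding S_def by (rule fin_S)
  have sumOL: "(\<Sum>z\<in>S. OL M lam (zs@[z]) (as@[a]) r) = OL M lam (zs@[{}]) (as@[a]) r" for r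
  proof -
    have "\<forall>z\<in>S - {{}}. OL M lam (zs@[z]) (as@[a]) r = 0"
    proof
      fix z assume "z \<in> S - {{}}"
      then show "OL M lam (zs@[z]) (as@[a]) r = 0" by (intro OL_zero[of z]) auto
    qed
    then show ?thesis by (subst sum.remove[OF finS e]) (simp add: sum.neutral)
  qed
  have sumG: "(\<Sum>z\<in>S. G z) = G {}"
    using finS e Gz by (subst sum.remove[OF finS e]) (auto intro!: sum.neutral)
  have "joint M zs as * cl_Q M lam A (Suc m) zs as a =
     (\<Sum>z\<in>S. joint M (zs@[z]) (as@[a]) * (mms_gospa M (zs @ [z]) (as @ [a])
         + lam * Min ((cl_Q M lam A m (zs @ [z]) (as @ [a])) ` A)))"
    using Suc.prems by (simp add: S_def sum_distrib_left mult.assoc[symmetric] joint_pred)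
  also have "\<dots> = C + lam * (\<Sum>z\<in>S. G z)"
    unfolding C_def step[symmetric]
    by (simp add: distrib_left sum.distrib sum_distrib_left mult_ac)
  also have "\<dots> = C + lam * G {}" by (simp add: sumG)
  also have "\<dots> = Min ((\<lambda>x. C + lam * x) ` (\<lambda>r. OL M lam (zs@[{}]) (as@[a]) r) ` LL A (Suc m))"
  proof -
    have "mono (\<lambda>x. C + lam * x)" using lam by (auto intro!: monoI mult_left_mono)
    then show ?thesis unfolding G_def using finL by (intro mono_Min_commute) auto
  qed
  also have "\<dots> = Min ((\<lambda>r. OL M lam zs as (a#r)) ` LL A (Suc m))"
    unfolding image_image using Suc.prems
    by (intro arg_cong[where f=Min] image_cong refl) (simp add: OL_decomp C_def S_def sumOL[unfolded S_def])
  finally show ?case .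
qed

end

theorem mainTheorem1:
  fixes M :: "'a search_model" and A :: "'a set" and T :: nat and lam :: real
    and tb :: "'a set \<Rightarrow> 'a"
  assumes "finite A" and "A \<noteq> {}"
    and "1 \<le> T"
    and "0 \<le> lam" and "lam \<le> 1"
    and "0 < pd M" and "pd M \<le> 1"
    and "0 \<le> pex M" and "pex M \<le> 1"
    and "\<forall>i\<in>{1..nH M}. 0 \<le> wt M i" and "(\<Sum>i\<in>{1..nH M}. wt M i) = 1"
    and "0 < cut M"
  shows "tb (argmin_set A (cl_obj M lam T A)) = tb (argmin_set A (ol_obj M lam T A))"
proof -
  have pd0: "0 \<le> pd M" using assms by simp
  have j1: "joint M [] [] = 1"
  proof -
    have e: "{..nH M} = insert 0 {1..nH M}" by auto
    have "joint M [] [] = (\<Sum>i\<le>nH M. prior M i)" unfolding joint_def jw_def by simp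
    also have "\<dots> = prior M 0 + (\<Sum>i\<in>{1..nH M}. pex M * wt M i)"
      unfolding e by (subst sum.insert) (auto simp: prior_def intro!: sum.cong)
    also have "\<dots> = 1" using assms(11) by (simp add: prior_def sum_distrib_left[symmetric])
    finally show ?thesis .
  qed
  have eq: "cl_obj M lam T A a1 = ol_obj M lam T A a1" for a1
  proof -
    have "cl_obj M lam T A a1 = joint M [] [] * cl_Q M lam A (T-1) [] [] a1"
      unfolding cl_obj_def j1 by simp
    also have "\<dots> = Min ((\<lambda>r. OL M lam [] [] (a1#r)) ` LL A (T-1))"
      by (rule main_ind[OF pd0 assms(7,8,9,10,1,2,4)]) simp
    also have "\<dots> = ol_obj M lam T A a1"
      unfolding ol_obj_def
    proof (intro arg_cong[where f=Min] image_cong)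
      show "LL A (T-1) = {rest. length rest = T - 1 \<and> set rest \<subseteq> A}" by (simp add: LL_def)
    next
      fix r assume "r \<in> {rest. length rest = T - 1 \<and> set rest \<subseteq> A}"
      then have "length (a1#r) = T" using assms(3) by auto
      then show "OL M lam [] [] (a1#r) = ol_cost M lam T (a1#r)"
        unfolding OL_def ol_cost_def LL_def by simp
    qed
    finally show ?thesis .
  qed
  then have "argmin_set A (cl_obj M lam T A) = argmin_set A (ol_obj M lam T A)"
    unfolding argmin_set_def by simp
  then show ?thesis by simp
qed

end
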